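(* Let $m,n>-1/2$, $\alpha_1,\alpha_2>0$, $0\le|\beta_i|<\alpha_i$ ($i=1,2$), let $X\sim\mathrm{VG}(m,\alpha_1,\beta_1,0)$ and $Y\sim\mathrm{VG}(n,\alpha_2,\beta_2,0)$ be independent and $Z=XY$. Then \[ \mathbb{P}(Z\le0)=P_{m,\alpha_1,\beta_1}+P_{n,\alpha_2,\beta_2}-2P_{m,\alpha_1,\beta_1}P_{n,\alpha_2,\beta_2}, \] where for $\mu>-1/2$, $0\le|\beta|<\alpha$, \[ P_{\mu,\alpha,\beta}=\frac12-\frac{\Gamma(\mu+1)}{\sqrt\pi\,\Gamma(\mu+1/2)}\frac{\beta}{\alpha}\Big(1-\frac{\beta^2}{\alpha^2}\Big)^{\mu+1/2}{}_2F_1\Big(1,\mu+1;\frac32;\frac{\beta^2}{\alpha^2}\Big). \]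
   Context: For $\mu>-1/2$, $\alpha>0$ and $0\le|\beta|<\alpha$, $\mathrm{VG}(\mu,\alpha,\beta,0)$ denotes the variance-gamma distribution on $\mathbb{R}$ with probability density function $f(x)=\frac{(\alpha^2-\beta^2)^{\mu+1/2}}{\sqrt{\pi}(2\alpha)^{\mu}\Gamma(\mu+1/2)}e^{\beta x}|x|^{\mu}K_{\mu}(\alpha|x|)$, where $K_\nu$ is the modified Bessel function of the second kind. ${}_2F_1(a,b;c;x)=\sum_{j\ge0}\frac{(a)_j(b)_j}{(c)_j}\frac{x^j}{j!}$ for $|x|<1$ is the Gaussian hypergeometric function, with $(u)_j=u(u+1)\cdots(u+j-1)$. *)

theory Defs
  imports "HOL-Probability.Probability"
begin

definition besselK :: "real \<Rightarrow> real \<Rightarrow> real" where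
  "besselK \<nu> x = (LINT t:{0..}|lborel. exp (- x * cosh t) * cosh (\<nu> * t))"

definition hyp2F1 :: "real \<Rightarrow> real \<Rightarrow> real \<Rightarrow> real \<Rightarrow> real" where
  "hyp2F1 a b c x = (\<Sum>j. pochhammer a j * pochhammer b j / pochhammer c j * x ^ j / fact j)"

definition vg_pdf :: "real \<Rightarrow> real \<Rightarrow> real \<Rightarrow> real \<Rightarrow> real" where
  "vg_pdf \<mu> \<alpha> \<beta> x =
     (\<alpha>\<^sup>2 - \<beta>\<^sup>2) powr (\<mu> + 1/2) / (sqrt pi * (2 * \<alpha>) powr \<mu> * Gamma (\<mu> + 1/2))
     * exp (\<beta> * x) * \<bar>x\<bar> powr \<mu> * besselK \<mu> (\<alpha> * \<bar>x\<bar>)"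

definition vgP :: "real \<Rightarrow> real \<Rightarrow> real \<Rightarrow> real" where
  "vgP \<mu> \<alpha> \<beta> =
     1/2 - Gamma (\<mu> + 1) / (sqrt pi * Gamma (\<mu> + 1/2)) * (\<beta> / \<alpha>)
       * (1 - \<beta>\<^sup>2 / \<alpha>\<^sup>2) powr (\<mu> + 1/2)
       * hyp2F1 1 (\<mu> + 1) (3/2) (\<beta>\<^sup>2 / \<alpha>\<^sup>2)"

end

theory Submission
  imports Defs
begin

lemma cosh_measurable[measurable]:
  assumes [measurable]: "f \<in> borel_measurable M"
  shows "(\<lambda>x. cosh (f x :: real)) \<in> borel_measurable M"
  unfolding cosh_def by measurable

lemma sinh_measurable[measurable]:
  assumes [measurable]: "f \<in> borel_measurable M"
  shows "(\<lambda>x. sinh (f x :: real)) \<in> borel_measurable M"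
  unfolding sinh_def by measurable

lemma gamma_scaled:
  fixes c s :: real
  assumes c: "c > 0" and s: "s > 0"
  shows "(\<integral>\<^sup>+x. ennreal (indicator {0<..} x * x powr (s - 1) * exp (- c * x)) \<partial>lborel)
         = ennreal (Gamma s / c powr s)"
proof -
  have "ennreal (Gamma s) = (\<integral>\<^sup>+t. ennreal (indicator {0..} t * t powr (s - 1) / exp t) \<partial>lborel)"
    using Gamma_conv_nn_integral_real[OF s] by simp
  also have "\<dots> = ennreal \<bar>c\<bar> * (\<integral>\<^sup>+x. ennreal (indicator {0..} (0 + c * x) * (0 + c * x) powr (s - 1) / exp (0 + c * x)) \<partial>lborel)"
    by (rule nn_integral_real_affine) (use c in auto)
  also have "\<dots> = ennreal c * (\<integral>\<^sup>+x. ennreal (c powr (s - 1)) * ennreal (indicator {0<..} x * x powr (s - 1) * exp (- c * x)) \<partial>lborel)"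
  proof -
    have "ennreal (indicator {0..} (0 + c * x) * (0 + c * x) powr (s - 1) / exp (0 + c * x))
        = ennreal (c powr (s - 1)) * ennreal (indicator {0<..} x * x powr (s - 1) * exp (- c * x))" for x
    proof (cases "x > 0")
      case True
      have "(c * x) powr (s - 1) / exp (c * x) = c powr (s - 1) * (x powr (s - 1) * exp (- c * x))"
        using c True by (simp add: powr_mult exp_minus divide_inverse)
      then show ?thesis using c True
        by (simp add: ennreal_mult'[symmetric] indicator_def)
    next
      case False
      then show ?thesis using c
        by (auto simp: indicator_def zero_le_mult_iff)
    qed
    then show ?thesis using c by simp
  qed
  also have "\<dots> = ennreal c * ennreal (c powr (s - 1)) * (\<integral>\<^sup>+x. ennreal (indicator {0<..} x * x powr (s - 1) * exp (- c * x)) \<partial>lborel)"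
    by (subst nn_integral_cmult) (auto simp: mult.assoc)
  also have "ennreal c * ennreal (c powr (s - 1)) = ennreal (c powr s)"
    using c by (simp add: ennreal_mult'[symmetric] powr_diff)
  finally have eq: "ennreal (Gamma s) = ennreal (c powr s) * (\<integral>\<^sup>+x. ennreal (indicator {0<..} x * x powr (s - 1) * exp (- c * x)) \<partial>lborel)" .
  have cs: "c powr s > 0" using c by simp
  have "ennreal (Gamma s / c powr s) = ennreal (Gamma s) / ennreal (c powr s)"
    using cs Gamma_real_pos[OF s] by (simp add: divide_ennreal)
  also have "\<dots> = (\<integral>\<^sup>+x. ennreal (indicator {0<..} x * x powr (s - 1) * exp (- c * x)) \<partial>lborel)"
    unfolding eq using cs
    using ennreal_mult_divide_eq[of "ennreal (c powr s)" "\<integral>\<^sup>+x. ennreal (indicator {0<..} x * x powr (s - 1) * exp (- c * x)) \<partial>lborel"] cs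
    by (simp add: mult.commute)
  finally show ?thesis ..
qed

lemma avg_le: "a \<le> c \<Longrightarrow> b \<le> c \<Longrightarrow> (a + b) / 2 \<le> (c::real)" by (simp add: field_simps)

lemma cosh_exp_bound:
  fixes t \<mu> :: real assumes "t > 0"
  shows "cosh (\<mu> * t) \<le> exp (\<bar>\<mu>\<bar> * t)"
proof -
  have m: "\<mu> * t \<le> \<bar>\<mu>\<bar> * t" "(- \<mu>) * t \<le> \<bar>\<mu>\<bar> * t"
    using assms by (intro mult_right_mono; simp)+
  have "exp (\<mu> * t) \<le> exp (\<bar>\<mu>\<bar> * t)" "exp (- (\<mu> * t)) \<le> exp (\<bar>\<mu>\<bar> * t)"
    using m by auto
  then show ?thesis unfolding cosh_field_def by (rule avg_le)
qed


lemma cosh_powr_bound: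
  fixes t p :: real assumes "t > 0" "p \<ge> 0"
  shows "cosh t powr (- p) \<le> 2 powr p * exp (- p * t)"
proof -
  have pos: "0 < exp t / 2" by simp
  have le: "exp t / 2 \<le> cosh t" unfolding cosh_def by (simp add: divide_right_mono)
  have "cosh t powr (- p) \<le> (exp t / 2) powr (- p)"
    by (rule powr_mono2') (use assms pos le in auto)
  also have "\<dots> = 2 powr p * exp (- p * t)"
    by (simp only: powr_divide exp_powr_real powr_minus) (simp add: divide_inverse mult_ac exp_minus)
  finally show ?thesis .
qed

lemma cosh_sech_finite:
  fixes \<mu> p :: real
  assumes "p > \<bar>\<mu>\<bar>"
  shows "(\<integral>\<^sup>+t. ennreal (indicator {0<..} t * cosh (\<mu> * t) * cosh t powr (- p)) \<partial>lborel) < \<infinity>"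
proof -
  have bound: "ennreal (indicator {0<..} t * cosh (\<mu> * t) * cosh t powr (- p))
      \<le> ennreal (2 powr p) * ennreal (indicator {0<..} t * t powr (1 - 1) * exp (- (p - \<bar>\<mu>\<bar>) * t))" for t
  proof (cases "t > 0")
    case True
    have "cosh (\<mu> * t) * cosh t powr (- p) \<le> exp (\<bar>\<mu>\<bar> * t) * (2 powr p * exp (- p * t))"
      by (rule mult_mono) (use True assms cosh_exp_bound[OF True] cosh_powr_bound[OF True, of p] in auto)
    also have "\<dots> = 2 powr p * exp (- (p - \<bar>\<mu>\<bar>) * t)"
      by (simp add: exp_add[symmetric] algebra_simps)
    finally show ?thesis using True by (simp add: ennreal_mult'[symmetric] indicator_def)
  qed (simp add: indicator_def)
  have "(\<integral>\<^sup>+t. ennreal (indicator {0<..} t * cosh (\<mu> * t) * cosh t powr (- p)) \<partial>lborel)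
      \<le> (\<integral>\<^sup>+t. ennreal (2 powr p) * ennreal (indicator {0<..} t * t powr (1 - 1) * exp (- (p - \<bar>\<mu>\<bar>) * t)) \<partial>lborel)"
    by (rule nn_integral_mono) (rule bound)
  also have "\<dots> = ennreal (2 powr p) * ennreal (Gamma 1 / (p - \<bar>\<mu>\<bar>) powr 1)"
    by (subst nn_integral_cmult) (use assms gamma_scaled[of "p - \<bar>\<mu>\<bar>" 1] in auto)
  also have "\<dots> < \<infinity>" by (simp add: ennreal_mult_less_top)
  finally show ?thesis .
qed

lemma besselK_nn:
  fixes a \<mu> :: real
  assumes a: "a > 0"
  shows "(\<integral>\<^sup>+t. ennreal (indicator {0<..} t * (exp (- a * cosh t) * cosh (\<mu> * t))) \<partial>lborel) = ennreal (besselK \<mu> a)"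
    and "besselK \<mu> a \<ge> 0"
proof -
  define N :: nat where "N = nat \<lceil>\<bar>\<mu>\<bar>\<rceil> + 1"
  have N: "real N > \<bar>\<mu>\<bar>" "N > 0" unfolding N_def by linarith+
  define K where "K = (real N / a) ^ N"
  have K: "K \<ge> 0" using a by (simp add: K_def)
  have gb: "exp (- a * cosh t) * cosh (\<mu> * t) \<le> K * (cosh (\<mu> * t) * cosh t powr (- real N))" for t
  proof -
    have cpos: "cosh t > 0" by simp
    define y where "y = a * cosh t"
    have y: "y > 0" using a cpos by (simp add: y_def)
    have "(y / real N) ^ N \<le> (1 + y / real N) ^ N"
      by (rule power_mono) (use y in auto)
    also have "\<dots> \<le> exp y"
      by (rule exp_ge_one_plus_x_over_n_power_n) (use y N in auto)
    finally have e: "(y / real N) ^ N \<le> exp y" .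
    have yN: "(y / real N) ^ N > 0" using y N by simp
    have "exp (- y) \<le> 1 / (y / real N) ^ N"
      using le_imp_inverse_le[OF e yN] by (simp add: exp_minus divide_inverse)
    also have "1 / (y / real N) ^ N = K * cosh t powr (- real N)"
    proof -
      have "cosh t powr (- real N) = 1 / cosh t ^ N"
        by (simp add: powr_minus powr_realpow divide_inverse)
      moreover have "(y / real N) ^ N = (a / real N) ^ N * cosh t ^ N"
        by (simp add: y_def power_mult_distrib[symmetric])
      moreover have "(real N / a) ^ N = 1 / (a / real N) ^ N"
        by (simp add: power_divide)
      ultimately show ?thesis using a N by (simp add: K_def)
    qed
    finally have "exp (- a * cosh t) \<le> K * cosh t powr (- real N)" by (simp add: y_def)
    then have "exp (- a * cosh t) * cosh (\<mu> * t) \<le> (K * cosh t powr (- real N)) * cosh (\<mu> * t)"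
      by (rule mult_right_mono) simp
    then show ?thesis by (simp add: mult_ac)
  qed
  have gnn: "exp (- a * cosh t) * cosh (\<mu> * t) \<ge> 0" for t by simp
  have fin: "(\<integral>\<^sup>+t. ennreal (indicator {0<..} t * (exp (- a * cosh t) * cosh (\<mu> * t))) \<partial>lborel) < \<infinity>"
  proof -
    have "(\<integral>\<^sup>+t. ennreal (indicator {0<..} t * (exp (- a * cosh t) * cosh (\<mu> * t))) \<partial>lborel)
       \<le> (\<integral>\<^sup>+t. ennreal K * ennreal (indicator {0<..} t * cosh (\<mu> * t) * cosh t powr (- real N)) \<partial>lborel)"
    proof (intro nn_integral_mono)
      fix t
      have "indicator {0<..} t * (exp (- a * cosh t) * cosh (\<mu> * t))
          \<le> K * (indicator {0<..} t * cosh (\<mu> * t) * cosh t powr (- real N))"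
        using gb[of t] by (simp add: indicator_def)
      then show "ennreal (indicator {0<..} t * (exp (- a * cosh t) * cosh (\<mu> * t)))
          \<le> ennreal K * ennreal (indicator {0<..} t * cosh (\<mu> * t) * cosh t powr (- real N))"
        using K by (simp add: ennreal_mult'[symmetric] ennreal_leI)
    qed
    also have "\<dots> < \<infinity>"
      using cosh_sech_finite[OF N(1)] by (subst nn_integral_cmult) (auto simp: ennreal_mult_less_top)
    finally show ?thesis .
  qed
  have eqAE: "(\<integral>\<^sup>+t. ennreal (indicator {0..} t * (exp (- a * cosh t) * cosh (\<mu> * t))) \<partial>lborel)
      = (\<integral>\<^sup>+t. ennreal (indicator {0<..} t * (exp (- a * cosh t) * cosh (\<mu> * t))) \<partial>lborel)"
    by (intro nn_integral_cong_AE eventually_mono[OF AE_lborel_singleton[of 0]]) (auto simp: indicator_def)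
  have int: "integrable lborel (\<lambda>t. indicator {0..} t * (exp (- a * cosh t) * cosh (\<mu> * t)))"
  proof (rule integrableI_bounded)
    show "(\<integral>\<^sup>+t. ennreal (norm (indicator {0..} t * (exp (- a * cosh t) * cosh (\<mu> * t)))) \<partial>lborel) < \<infinity>"
      using fin eqAE by (simp add: abs_mult)
  qed measurable
  have bK: "besselK \<mu> a = (\<integral>t. indicator {0..} t * (exp (- a * cosh t) * cosh (\<mu> * t)) \<partial>lborel)"
    unfolding besselK_def set_lebesgue_integral_def by (simp add: mult.assoc)
  moreover have "(\<integral>\<^sup>+t. ennreal (indicator {0..} t * (exp (- a * cosh t) * cosh (\<mu> * t))) \<partial>lborel)
      = ennreal (\<integral>t. indicator {0..} t * (exp (- a * cosh t) * cosh (\<mu> * t)) \<partial>lborel)"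
    by (rule nn_integral_eq_integral[OF int]) auto
  ultimately show "(\<integral>\<^sup>+t. ennreal (indicator {0<..} t * (exp (- a * cosh t) * cosh (\<mu> * t))) \<partial>lborel) = ennreal (besselK \<mu> a)"
    using eqAE by simp
  show "besselK \<mu> a \<ge> 0" unfolding bK
    by (rule Bochner_Integration.integral_nonneg) auto
qed

definition vgC :: "real \<Rightarrow> real \<Rightarrow> real \<Rightarrow> real" where
  "vgC \<mu> \<alpha> \<beta> = (\<alpha>\<^sup>2 - \<beta>\<^sup>2) powr (\<mu> + 1/2) / (sqrt pi * (2 * \<alpha>) powr \<mu> * Gamma (\<mu> + 1/2))"

definition NN :: "real \<Rightarrow> real \<Rightarrow> real \<Rightarrow> ennreal" where
  "NN \<mu> \<alpha> \<beta> = (\<integral>\<^sup>+t. ennreal (indicator {0<..} t * cosh (\<mu> * t) * (\<alpha> * cosh t + \<beta>) powr (- (\<mu> + 1))) \<partial>lborel)"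

lemma vgC_nonneg: "\<mu> > -1/2 \<Longrightarrow> \<alpha> > 0 \<Longrightarrow> vgC \<mu> \<alpha> \<beta> \<ge> 0"
  unfolding vgC_def by (intro divide_nonneg_pos mult_pos_pos) (auto intro!: Gamma_real_pos)

lemma vg_pdf_neg:
  assumes "x > 0"
  shows "vg_pdf \<mu> \<alpha> \<beta> (- x) = vgC \<mu> \<alpha> \<beta> * exp (- \<beta> * x) * x powr \<mu> * besselK \<mu> (\<alpha> * x)"
  using assms unfolding vg_pdf_def vgC_def by simp

lemma neg_half_integral:
  fixes \<mu> \<alpha> \<beta> :: real
  assumes mu: "\<mu> > -1/2" and al: "\<alpha> > 0" and be: "\<bar>\<beta>\<bar> < \<alpha>"
  shows "(\<integral>\<^sup>+x. ennreal (indicator {0<..} x * vg_pdf \<mu> \<alpha> \<beta> (- x)) \<partial>lborel)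
         = ennreal (vgC \<mu> \<alpha> \<beta> * Gamma (\<mu> + 1)) * NN \<mu> \<alpha> \<beta>"
proof -
  define C where "C = vgC \<mu> \<alpha> \<beta>"
  have C: "C \<ge> 0" unfolding C_def using vgC_nonneg[OF mu al] .
  define F where "F x t = ennreal (indicator {0<..} x * C * exp (- \<beta> * x) * x powr \<mu>)
      * ennreal (indicator {0<..} t * (exp (- (\<alpha> * x) * cosh t) * cosh (\<mu> * t)))" for x t
  have F_meas[measurable]: "case_prod F \<in> borel_measurable (lborel \<Otimes>\<^sub>M lborel)"
    unfolding F_def by measurable
  have s1: "ennreal (indicator {0<..} x * vg_pdf \<mu> \<alpha> \<beta> (- x)) = (\<integral>\<^sup>+t. F x t \<partial>lborel)" for x
  proof (cases "x > 0")
    case True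
    have ax: "\<alpha> * x > 0" using al True by simp
    have "ennreal (indicator {0<..} x * vg_pdf \<mu> \<alpha> \<beta> (- x))
        = ennreal (indicator {0<..} x * C * exp (- \<beta> * x) * x powr \<mu>) * ennreal (besselK \<mu> (\<alpha> * x))"
      using True C by (simp add: vg_pdf_neg C_def ennreal_mult'[symmetric] mult.assoc)
    also have "\<dots> = (\<integral>\<^sup>+t. F x t \<partial>lborel)"
      unfolding F_def using besselK_nn(1)[OF ax, of \<mu>] by (subst nn_integral_cmult) auto
    finally show ?thesis .
  next
    case False
    then show ?thesis by (simp add: F_def indicator_def)
  qed
  have s2: "(\<integral>\<^sup>+x. F x t \<partial>lborel) = ennreal (vgC \<mu> \<alpha> \<beta> * Gamma (\<mu> + 1))
      * ennreal (indicator {0<..} t * cosh (\<mu> * t) * (\<alpha> * cosh t + \<beta>) powr (- (\<mu> + 1)))" for t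
  proof -
    define c where "c = \<alpha> * cosh t + \<beta>"
    have c: "c > 0"
    proof -
      have "\<alpha> \<le> \<alpha> * cosh t" using al cosh_real_ge_1[of t] by simp
      then show ?thesis using be unfolding c_def by linarith
    qed
    have "F x t = ennreal (indicator {0<..} t * cosh (\<mu> * t) * C)
        * ennreal (indicator {0<..} x * x powr (\<mu> + 1 - 1) * exp (- c * x))" for x
    proof -
      have "indicator {0<..} x * C * exp (- \<beta> * x) * x powr \<mu> *
          (indicator {0<..} t * (exp (- (\<alpha> * x) * cosh t) * cosh (\<mu> * t)))
          = indicator {0<..} t * cosh (\<mu> * t) * C * (indicator {0<..} x * x powr (\<mu> + 1 - 1) * exp (- c * x))"
        by (simp add: c_def exp_add[symmetric] algebra_simps)
      moreover have "indicator {0<..} x * C * exp (- \<beta> * x) * x powr \<mu> \<ge> 0"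
        using C by (simp add: indicator_def)
      moreover have "indicator {0<..} t * cosh (\<mu> * t) * C \<ge> 0"
        using C by (simp add: indicator_def)
      ultimately show ?thesis unfolding F_def
        by (simp add: ennreal_mult'[symmetric])
    qed
    then have "(\<integral>\<^sup>+x. F x t \<partial>lborel) = ennreal (indicator {0<..} t * cosh (\<mu> * t) * C)
        * (\<integral>\<^sup>+x. ennreal (indicator {0<..} x * x powr (\<mu> + 1 - 1) * exp (- c * x)) \<partial>lborel)"
      by (simp add: nn_integral_cmult)
    also have "\<dots> = ennreal (indicator {0<..} t * cosh (\<mu> * t) * C) * ennreal (Gamma (\<mu> + 1) / c powr (\<mu> + 1))"
      using gamma_scaled[OF c, of "\<mu> + 1"] mu by simp
    also have "\<dots> = ennreal (C * Gamma (\<mu> + 1)) * ennreal (indicator {0<..} t * cosh (\<mu> * t) * c powr (- (\<mu> + 1)))"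
    proof -
      have g: "Gamma (\<mu> + 1) > 0" using mu by (intro Gamma_real_pos) simp
      have "indicator {0<..} t * cosh (\<mu> * t) * C * (Gamma (\<mu> + 1) / c powr (\<mu> + 1))
          = C * Gamma (\<mu> + 1) * (indicator {0<..} t * cosh (\<mu> * t) * c powr (- (\<mu> + 1)))"
        by (subst powr_minus) (simp add: divide_inverse mult_ac)
      moreover have "indicator {0<..} t * cosh (\<mu> * t) * C \<ge> 0" using C by (simp add: indicator_def)
      moreover have "C * Gamma (\<mu> + 1) \<ge> 0" using C g by simp
      ultimately show ?thesis using g c
        by (simp add: ennreal_mult'[symmetric])
    qed
    finally show ?thesis by (simp add: C_def c_def)
  qed
  have "(\<integral>\<^sup>+x. ennreal (indicator {0<..} x * vg_pdf \<mu> \<alpha> \<beta> (- x)) \<partial>lborel)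
      = (\<integral>\<^sup>+x. \<integral>\<^sup>+t. F x t \<partial>lborel \<partial>lborel)"
    using s1 by simp
  also have "\<dots> = (\<integral>\<^sup>+t. \<integral>\<^sup>+x. F x t \<partial>lborel \<partial>lborel)"
    by (rule lborel_pair.Fubini'[symmetric]) measurable
  also have "\<dots> = (\<integral>\<^sup>+t. ennreal (vgC \<mu> \<alpha> \<beta> * Gamma (\<mu> + 1))
      * ennreal (indicator {0<..} t * cosh (\<mu> * t) * (\<alpha> * cosh t + \<beta>) powr (- (\<mu> + 1))) \<partial>lborel)"
    using s2 by simp
  also have "\<dots> = ennreal (vgC \<mu> \<alpha> \<beta> * Gamma (\<mu> + 1)) * NN \<mu> \<alpha> \<beta>"
    unfolding NN_def by (rule nn_integral_cmult) measurable
  finally show ?thesis .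
qed

definition gfun :: "real \<Rightarrow> real \<Rightarrow> real \<Rightarrow> real" where
  "gfun \<mu> p t = cosh (\<mu> * t) * cosh t powr (- p)"

lemma gfun_measurable[measurable]: "gfun \<mu> p \<in> borel_measurable borel"
  unfolding gfun_def by measurable

lemma g_int:
  assumes "p > \<bar>\<mu>\<bar>"
  shows "set_integrable lborel {0<..} (gfun \<mu> p)"
    and "(\<integral>\<^sup>+t. ennreal (indicator {0<..} t * cosh (\<mu> * t) * cosh t powr (- p)) \<partial>lborel)
         = ennreal (LINT t:{0<..}|lborel. gfun \<mu> p t)"
proof -
  have fin: "(\<integral>\<^sup>+t. ennreal (indicator {0<..} t * cosh (\<mu> * t) * cosh t powr (- p)) \<partial>lborel) < \<infinity>"
    by (rule cosh_sech_finite[OF assms])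
  have eq: "(\<lambda>t. indicator {0<..} t *\<^sub>R gfun \<mu> p t) = (\<lambda>t. indicator {0<..} t * cosh (\<mu> * t) * cosh t powr (- p))"
    by (auto simp: gfun_def)
  have int: "integrable lborel (\<lambda>t. indicator {0<..} t * cosh (\<mu> * t) * cosh t powr (- p))"
  proof (rule integrableI_bounded)
    show "(\<integral>\<^sup>+t. ennreal (norm (indicator {0<..} t * cosh (\<mu> * t) * cosh t powr (- p))) \<partial>lborel) < \<infinity>"
      using fin by (simp add: abs_mult)
  qed measurable
  then show "set_integrable lborel {0<..} (gfun \<mu> p)"
    unfolding set_integrable_def eq .
  show "(\<integral>\<^sup>+t. ennreal (indicator {0<..} t * cosh (\<mu> * t) * cosh t powr (- p)) \<partial>lborel)
         = ennreal (LINT t:{0<..}|lborel. gfun \<mu> p t)"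
    unfolding set_lebesgue_integral_def eq
    by (rule nn_integral_eq_integral[OF int]) auto
qed

lemma gfun_nonneg: "gfun \<mu> p t \<ge> 0"
  unfolding gfun_def by simp

lemma deriv_coshpow: "((\<lambda>t. cosh t powr r) has_real_derivative (r * cosh t powr (r - 1) * sinh t)) (at t)"
proof -
  have "DERIV cosh t :> sinh t" using has_field_derivative_cosh[OF DERIV_ident] by simp
  from DERIV_fun_powr[OF this cosh_real_pos, of r] show ?thesis by simp
qed

lemma exp_neg_lim: "(c::real) > 0 \<Longrightarrow> ((\<lambda>t. exp (- t * c)) \<longlongrightarrow> 0) at_top"
  by (auto intro!: exp_at_bot[THEN filterlim_compose] filterlim_tendsto_pos_mult_at_top filterlim_ident
             simp: filterlim_uminus_at_bot mult.commute[of _ c])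

lemma gfun_bound:
  assumes "t > 0" "p \<ge> 0"
  shows "gfun \<mu> p t \<le> 2 powr p * exp (- t * (p - \<bar>\<mu>\<bar>))"
proof -
  have "gfun \<mu> p t \<le> exp (\<bar>\<mu>\<bar> * t) * (2 powr p * exp (- p * t))"
    unfolding gfun_def
    by (rule mult_mono) (use assms cosh_exp_bound[OF assms(1)] cosh_powr_bound[OF assms] in auto)
  also have "\<dots> = 2 powr p * exp (- t * (p - \<bar>\<mu>\<bar>))"
    by (simp add: exp_add[symmetric] algebra_simps)
  finally show ?thesis .
qed

lemma A0:
  fixes \<mu> :: real
  assumes mu: "\<mu> > -1/2"
  shows "(LINT t:{0<..}|lborel. gfun \<mu> (\<mu> + 2) t) = 2 powr \<mu> / (\<mu> + 1)"
proof -
  define a where "a = \<mu> + 1"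
  have a: "a > 0" using mu by (simp add: a_def)
  define F where "F t = sinh (a * t) * cosh t powr (- a)" for t
  define f where "f t = a * gfun \<mu> (\<mu> + 2) t" for t
  have deriv: "DERIV F t :> f t" for t
  proof -
    have s: "DERIV (\<lambda>t. sinh (a * t)) t :> cosh (a * t) * a"
      by (auto intro!: derivative_eq_intros)
    have d: "DERIV F t :> cosh (a * t) * a * cosh t powr (- a) + sinh (a * t) * (- a * cosh t powr (- a - 1) * sinh t)"
      unfolding F_def using DERIV_mult[OF s deriv_coshpow[of "- a" t]] by (simp add: mult_ac)
    have e1: "cosh t powr (- a) = cosh t * cosh t powr (- (\<mu> + 2))"
    proof -
      have "cosh t powr (- a) = cosh t powr (1 + (- (\<mu> + 2)))"
        by (rule arg_cong[where f="(powr) (cosh t)"]) (simp add: a_def)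
      also have "\<dots> = cosh t * cosh t powr (- (\<mu> + 2))" by (subst powr_add) simp
      finally show ?thesis .
    qed
    have e2: "cosh t powr (- a - 1) = cosh t powr (- (\<mu> + 2))"
      by (rule arg_cong[where f="(powr) (cosh t)"]) (simp add: a_def)
    have e3: "cosh (a * t) * cosh t - sinh (a * t) * sinh t = cosh (\<mu> * t)"
      using cosh_diff[of "a * t" t] by (simp add: a_def algebra_simps)
    have "cosh (a * t) * a * cosh t powr (- a) + sinh (a * t) * (- a * cosh t powr (- a - 1) * sinh t)
        = a * cosh t powr (- (\<mu> + 2)) * (cosh (a * t) * cosh t - sinh (a * t) * sinh t)"
      unfolding e1 e2 by (simp add: algebra_simps)
    also have "\<dots> = f t" unfolding e3 f_def gfun_def by (simp add: mult_ac)
    finally show ?thesis using d by simp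
  qed
  have Fid: "F t = 2 powr \<mu> * (1 - exp (- t * (2 * a))) * (1 + exp (- t * 2)) powr (- a)" for t
  proof -
    have sh: "sinh (a * t) = exp (a * t) * (1 - exp (- t * (2 * a))) / 2"
      by (simp add: sinh_field_def algebra_simps exp_add[symmetric])
    have ch: "cosh t = exp t * ((1 + exp (- t * 2)) / 2)"
      by (simp add: cosh_field_def algebra_simps exp_add[symmetric])
    have "cosh t powr (- a) = exp t powr (- a) * ((1 + exp (- t * 2)) / 2) powr (- a)"
      unfolding ch by (rule powr_mult)
    also have "\<dots> = exp (- a * t) * ((1 + exp (- t * 2)) powr (- a) * 2 powr a)"
      by (simp only: exp_powr_real powr_divide powr_minus) (simp add: divide_inverse mult_ac exp_minus)
    finally have cp: "cosh t powr (- a) = exp (- a * t) * ((1 + exp (- t * 2)) powr (- a) * 2 powr a)" .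
    have two: "2 powr a / 2 = 2 powr \<mu>"
      by (simp add: a_def powr_add)
    have "F t = (exp (a * t) * exp (- a * t)) * (1 - exp (- t * (2 * a))) * (1 + exp (- t * 2)) powr (- a) * (2 powr a / 2)"
      unfolding F_def sh cp by (simp add: mult_ac)
    also have "exp (a * t) * exp (- a * t) = 1" by (simp add: exp_add[symmetric])
    finally show ?thesis unfolding two by (simp add: mult_ac)
  qed
  have limtop: "(F \<longlongrightarrow> 2 powr \<mu>) at_top"
  proof -
    have l1: "((\<lambda>t. exp (- t * (2 * a))) \<longlongrightarrow> 0) at_top" by (rule exp_neg_lim) (use a in simp)
    have l2: "((\<lambda>t::real. exp (- t * 2)) \<longlongrightarrow> 0) at_top" by (rule exp_neg_lim) simp
    have "((\<lambda>t. 2 powr \<mu> * (1 - exp (- t * (2 * a))) * (1 + exp (- t * 2)) powr (- a))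
        \<longlongrightarrow> 2 powr \<mu> * (1 - 0) * (1 + 0) powr (- a)) at_top"
      by (intro tendsto_intros l1 l2) simp
    then show ?thesis unfolding Fid[abs_def] by simp
  qed
  have F0: "F 0 = 0" by (simp add: F_def)
  have limzero: "(F \<longlongrightarrow> 0) (at_right 0)"
  proof -
    have "isCont F 0" using deriv by (rule DERIV_isCont)
    then have "(F \<longlongrightarrow> 0) (at 0)" using F0 by (simp add: isCont_def)
    then show ?thesis by (simp add: filterlim_at_split)
  qed
  have fc: "isCont f x" for x
    unfolding f_def gfun_def by (intro continuous_intros) auto
  have fnn: "AE x in lborel. 0 < ereal x \<longrightarrow> ereal x < \<infinity> \<longrightarrow> 0 \<le> f x"
    by (intro AE_I2) (use a in \<open>simp add: f_def gfun_nonneg\<close>)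
  have A: "((F \<circ> real_of_ereal) \<longlongrightarrow> 0) (at_right 0)"
    unfolding zero_ereal_def ereal_tendsto_simps1 by (rule limzero)
  have B: "((F \<circ> real_of_ereal) \<longlongrightarrow> 2 powr \<mu>) (at_left \<infinity>)"
    unfolding ereal_tendsto_simps1 by (rule limtop)
  have lt: "(0::ereal) < \<infinity>" by simp
  note I = interval_integral_FTC_nonneg[where a=0 and b=\<infinity> and F=F and f=f and A=0 and B="2 powr \<mu>",
      OF lt deriv fc fnn A B]
  have ftc: "(LBINT x=0..\<infinity>. f x) = 2 powr \<mu> - 0" by (rule I(2))
  have "(LINT t:{0<..}|lborel. f t) = 2 powr \<mu>"
    using ftc by (simp add: interval_lebesgue_integral_0_infty)
  then have "a * (LINT t:{0<..}|lborel. gfun \<mu> (\<mu> + 2) t) = 2 powr \<mu>"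
    unfolding f_def by simp
  then show ?thesis using a by (simp add: a_def field_simps)
qed

lemma Arec:
  fixes \<mu> p :: real
  assumes p: "p > \<bar>\<mu>\<bar>"
  shows "p * (p + 1) * (LINT t:{0<..}|lborel. gfun \<mu> (p + 2) t)
         = (p\<^sup>2 - \<mu>\<^sup>2) * (LINT t:{0<..}|lborel. gfun \<mu> p t)"
proof -
  have p0: "p > 0" using p by linarith
  define G where "G t = - (p * cosh (\<mu> * t) * sinh t * cosh t powr (- p - 1) + \<mu> * sinh (\<mu> * t) * cosh t powr (- p))" for t
  define f where "f t = (p\<^sup>2 - \<mu>\<^sup>2) * gfun \<mu> p t - p * (p + 1) * gfun \<mu> (p + 2) t" for t
  have deriv: "DERIV G t :> f t" for t
  proof -
    have dch: "DERIV (\<lambda>t. cosh (\<mu> * t)) t :> sinh (\<mu> * t) * \<mu>"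
      by (auto intro!: derivative_eq_intros)
    have dsh: "DERIV (\<lambda>t. sinh (\<mu> * t)) t :> cosh (\<mu> * t) * \<mu>"
      by (auto intro!: derivative_eq_intros)
    have ds: "DERIV (\<lambda>t. sinh t) t :> cosh t"
      by (auto intro!: derivative_eq_intros)
    note d1 = deriv_coshpow[of "- p - 1" t]
    note d0 = deriv_coshpow[of "- p" t]
    note dG = DERIV_minus[OF DERIV_add[OF DERIV_mult[OF DERIV_mult[OF DERIV_cmult[OF dch, of p] ds] d1]
                                         DERIV_mult[OF DERIV_cmult[OF dsh, of \<mu>] d0]]]
    have G_eq: "G = (\<lambda>t. - (p * cosh (\<mu> * t) * sinh t * cosh t powr (- p - 1) + \<mu> * sinh (\<mu> * t) * cosh t powr (- p)))"
      by (simp add: G_def fun_eq_iff)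
    define P where "P = cosh t powr (- p - 2)"
    have e1: "cosh t powr (- p - 1) = cosh t * P"
    proof -
      have "cosh t powr (- p - 1) = cosh t powr (1 + (- p - 2))"
        by (rule arg_cong[where f="(powr) (cosh t)"]) simp
      also have "\<dots> = cosh t * P" unfolding P_def by (subst powr_add) simp
      finally show ?thesis .
    qed
    have e0: "cosh t powr (- p) = cosh t * cosh t * P"
    proof -
      have "cosh t powr (- p) = cosh t powr (1 + (1 + (- p - 2)))"
        by (rule arg_cong[where f="(powr) (cosh t)"]) simp
      also have "\<dots> = cosh t * cosh t * P" unfolding P_def by (subst powr_add)+ simp
      finally show ?thesis .
    qed
    have e2: "cosh t powr (- p - 1 - 1) = P"
      unfolding P_def by (rule arg_cong[where f="(powr) (cosh t)"]) simp
    have e3: "cosh t powr (- p - 1 - 1) = P"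
      unfolding P_def by (rule arg_cong[where f="(powr) (cosh t)"]) simp
    have e4: "cosh t powr (- (p + 2)) = P"
      unfolding P_def by (rule arg_cong[where f="(powr) (cosh t)"]) simp
    have rel: "cosh t ^ 2 = sinh t ^ 2 + 1" by (rule cosh_square_eq)
    show ?thesis unfolding G_eq
      apply (rule DERIV_cong[OF dG])
      unfolding f_def gfun_def e2 e4 e0 e1
      using rel by algebra
  qed
  have G0: "G 0 = 0" by (simp add: G_def)
  have limzero: "(G \<longlongrightarrow> 0) (at_right 0)"
  proof -
    have "isCont G 0" using deriv by (rule DERIV_isCont)
    then have "(G \<longlongrightarrow> 0) (at 0)" using G0 by (simp add: isCont_def)
    then show ?thesis by (simp add: filterlim_at_split)
  qed
  have bnd: "norm (G t) \<le> (p + \<bar>\<mu>\<bar>) * 2 powr p * exp (- t * (p - \<bar>\<mu>\<bar>))" if t: "t > 0" for t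
  proof -
    have s0: "sinh t \<ge> 0" using t by simp
    have sc: "sinh t \<le> cosh t" by (rule sinh_le_cosh_real)
    have cp: "cosh t * cosh t powr (- p - 1) = cosh t powr (- p)"
    proof -
      have "cosh t powr (- p) = cosh t powr (1 + (- p - 1))"
        by (rule arg_cong[where f="(powr) (cosh t)"]) simp
      also have "\<dots> = cosh t * cosh t powr (- p - 1)" by (subst powr_add) simp
      finally show ?thesis by simp
    qed
    have t1: "\<bar>p * cosh (\<mu> * t) * sinh t * cosh t powr (- p - 1)\<bar> \<le> p * gfun \<mu> p t"
    proof -
      have "\<bar>p * cosh (\<mu> * t) * sinh t * cosh t powr (- p - 1)\<bar> = p * cosh (\<mu> * t) * (sinh t * cosh t powr (- p - 1))"
        using p0 s0 by (simp add: abs_mult)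
      also have "\<dots> \<le> p * cosh (\<mu> * t) * (cosh t * cosh t powr (- p - 1))"
        using p0 sc by (intro mult_left_mono mult_right_mono) auto
      also have "\<dots> = p * gfun \<mu> p t" unfolding cp gfun_def by simp
      finally show ?thesis .
    qed
    have t2: "\<bar>\<mu> * sinh (\<mu> * t) * cosh t powr (- p)\<bar> \<le> \<bar>\<mu>\<bar> * gfun \<mu> p t"
    proof -
      have "\<bar>sinh (\<mu> * t)\<bar> \<le> cosh (\<mu> * t)"
        using sinh_le_cosh_real[of "\<bar>\<mu> * t\<bar>"] by simp
      then have "\<bar>sinh (\<mu> * t)\<bar> * cosh t powr - p \<le> cosh (\<mu> * t) * cosh t powr - p"
        by (rule mult_right_mono) simp
      then have "\<bar>\<mu>\<bar> * (\<bar>sinh (\<mu> * t)\<bar> * cosh t powr - p) \<le> \<bar>\<mu>\<bar> * (cosh (\<mu> * t) * cosh t powr - p)"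
        by (rule mult_left_mono) simp
      then show ?thesis unfolding gfun_def by (simp add: abs_mult mult_ac)
    qed
    have "norm (G t) \<le> p * gfun \<mu> p t + \<bar>\<mu>\<bar> * gfun \<mu> p t"
      unfolding G_def real_norm_def using t1 t2 by linarith
    also have "\<dots> = (p + \<bar>\<mu>\<bar>) * gfun \<mu> p t" by (simp add: algebra_simps)
    also have "\<dots> \<le> (p + \<bar>\<mu>\<bar>) * (2 powr p * exp (- t * (p - \<bar>\<mu>\<bar>)))"
      using gfun_bound[OF t, of p \<mu>] p0 by (intro mult_left_mono) auto
    finally show ?thesis by (simp add: mult_ac)
  qed
  have limtop: "(G \<longlongrightarrow> 0) at_top"
  proof (rule Lim_null_comparison)
    show "\<forall>\<^sub>F t in at_top. norm (G t) \<le> (p + \<bar>\<mu>\<bar>) * 2 powr p * exp (- t * (p - \<bar>\<mu>\<bar>))"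
      using eventually_gt_at_top[of 0] by eventually_elim (rule bnd)
    have "((\<lambda>t. exp (- t * (p - \<bar>\<mu>\<bar>))) \<longlongrightarrow> 0) at_top" by (rule exp_neg_lim) (use p in simp)
    then show "((\<lambda>t. (p + \<bar>\<mu>\<bar>) * 2 powr p * exp (- t * (p - \<bar>\<mu>\<bar>))) \<longlongrightarrow> 0) at_top"
      by (rule tendsto_mult_right_zero)
  qed
  have fc: "isCont f x" for x
    unfolding f_def gfun_def by (intro continuous_intros) auto
  have p2: "p + 2 > \<bar>\<mu>\<bar>" using p by linarith
  have fint: "set_integrable lborel (einterval 0 \<infinity>) f"
  proof -
    have "set_integrable lborel {0<..} f"
      unfolding f_def by (intro set_integral_diff(1) set_integrable_mult_right g_int(1) p p2)
    then show ?thesis by (simp add: zero_ereal_def)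
  qed
  have A: "((G \<circ> real_of_ereal) \<longlongrightarrow> 0) (at_right 0)"
    unfolding zero_ereal_def ereal_tendsto_simps1 by (rule limzero)
  have B: "((G \<circ> real_of_ereal) \<longlongrightarrow> 0) (at_left \<infinity>)"
    unfolding ereal_tendsto_simps1 by (rule limtop)
  have lt: "(0::ereal) < \<infinity>" by simp
  have dv: "(G has_vector_derivative f x) (at x)" for x
    using deriv[of x] by (simp add: has_real_derivative_iff_has_vector_derivative)
  have ftc: "(LBINT x=0..\<infinity>. f x) = 0 - 0"
    by (rule interval_integral_FTC_integrable[where a=0 and b=\<infinity> and F=G and f=f and A=0 and B=0,
      OF lt dv fc fint A B])
  then have "(LINT t:{0<..}|lborel. f t) = 0"
    by (simp add: interval_lebesgue_integral_0_infty)
  moreover have "(LINT t:{0<..}|lborel. f t) = (p\<^sup>2 - \<mu>\<^sup>2) * (LINT t:{0<..}|lborel. gfun \<mu> p t)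
      - p * (p + 1) * (LINT t:{0<..}|lborel. gfun \<mu> (p + 2) t)"
    unfolding f_def by (subst set_integral_diff(2)) (auto intro!: g_int(1) p p2)
  ultimately show ?thesis by simp
qed

fun aa :: "real \<Rightarrow> nat \<Rightarrow> real" where
  "aa \<mu> 0 = 2 powr \<mu> / (\<mu> + 1)"
| "aa \<mu> (Suc k) = 4 * (real k + 1) * (\<mu> + real k + 1) / ((\<mu> + 2 * real k + 2) * (\<mu> + 2 * real k + 3)) * aa \<mu> k"

lemma Aval:
  assumes mu: "\<mu> > -1/2"
  shows "(LINT t:{0<..}|lborel. gfun \<mu> (\<mu> + 2 * real k + 2) t) = aa \<mu> k"
proof (induction k)
  case 0
  then show ?case using A0[OF mu] by simp
next
  case (Suc k)
  define p where "p = \<mu> + 2 * real k + 2"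
  have p: "p > \<bar>\<mu>\<bar>" using mu by (simp add: p_def)
  have pp: "p * (p + 1) > 0" using p by (intro mult_pos_pos) linarith+
  have eq: "\<mu> + 2 * real (Suc k) + 2 = p + 2" by (simp add: p_def)
  have "p * (p + 1) * (LINT t:{0<..}|lborel. gfun \<mu> (p + 2) t) = (p\<^sup>2 - \<mu>\<^sup>2) * aa \<mu> k"
    using Arec[OF p] Suc.IH by (simp add: p_def)
  moreover have "p\<^sup>2 - \<mu>\<^sup>2 = 4 * (real k + 1) * (\<mu> + real k + 1)"
    by (simp add: p_def power2_eq_square algebra_simps)
  ultimately have "(LINT t:{0<..}|lborel. gfun \<mu> (p + 2) t) = 4 * (real k + 1) * (\<mu> + real k + 1) / (p * (p + 1)) * aa \<mu> k"
    using pp by (simp add: field_simps)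
  moreover have "p * (p + 1) = (\<mu> + 2 * real k + 2) * (\<mu> + 2 * real k + 3)"
    by (simp add: p_def algebra_simps)
  ultimately show ?case unfolding eq by simp
qed

definition RR :: "real \<Rightarrow> nat \<Rightarrow> real" where
  "RR \<mu> k = pochhammer 1 k * pochhammer (\<mu> + 1) k / (pochhammer (3/2) k * fact k)"

lemma frac_aux:
  fixes u v w f k m :: real
  assumes "w \<noteq> 0" "f \<noteq> 0" "k \<ge> 0"
  shows "u * (1 + k) * (v * (m + 1 + k)) / (w * (3/2 + k) * (f * (k + 1)))
       = u * v / (w * f) * (2 * (m + k + 1) / (2 * k + 3))"
proof -
  have a: "1 + k \<noteq> 0" "3/2 + k \<noteq> 0" "k + 1 \<noteq> 0" "2 * k + 3 \<noteq> 0" using assms by linarith+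
  have r: "u * v / (w * f) * (2 * (m + k + 1) / (2 * k + 3)) = (u * v * (2 * (m + k + 1))) / (w * f * (2 * k + 3))"
    by simp
  have n1: "w * (3/2 + k) * (f * (k + 1)) \<noteq> 0" using assms a by simp
  have n2: "w * f * (2 * k + 3) \<noteq> 0" using assms a by simp
  show ?thesis unfolding r
    by (subst frac_eq_eq[OF n1 n2]) (simp add: field_simps)
qed

lemma frac_aux2:
  fixes P F A m k :: real
  assumes "F \<noteq> 0" "k \<ge> 0" "m + 2 * k + 2 > 0" "m + 2 * k + 3 > 0"
  shows "P * (m + 2 * k + 2) * (m + 2 * k + 3) / (F * (2 * k + 2) * (2 * k + 3))
      * (4 * (k + 1) * (m + k + 1) / ((m + 2 * k + 2) * (m + 2 * k + 3)) * A)
    = P / F * A * (2 * (m + k + 1) / (2 * k + 3))"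
proof -
  have a: "2 * k + 2 \<noteq> 0" "2 * k + 3 \<noteq> 0" using assms by linarith+
  have l: "P * (m + 2 * k + 2) * (m + 2 * k + 3) / (F * (2 * k + 2) * (2 * k + 3))
      * (4 * (k + 1) * (m + k + 1) / ((m + 2 * k + 2) * (m + 2 * k + 3)) * A)
      = (P * (m + 2 * k + 2) * (m + 2 * k + 3) * (4 * (k + 1) * (m + k + 1)) * A)
        / (F * (2 * k + 2) * (2 * k + 3) * ((m + 2 * k + 2) * (m + 2 * k + 3)))"
    by simp
  have r: "P / F * A * (2 * (m + k + 1) / (2 * k + 3)) = (P * A * (2 * (m + k + 1))) / (F * (2 * k + 3))"
    by simp
  have n1: "F * (2 * k + 2) * (2 * k + 3) * ((m + 2 * k + 2) * (m + 2 * k + 3)) \<noteq> 0" using assms a by simp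
  have n2: "F * (2 * k + 3) \<noteq> 0" using assms a by simp
  show ?thesis unfolding l r
    by (subst frac_eq_eq[OF n1 n2]) (simp add: algebra_simps)
qed

lemma QR:
  assumes mu: "\<mu> > -1/2"
  shows "pochhammer (\<mu> + 1) (2 * k + 1) / fact (2 * k + 1) * aa \<mu> k = 2 powr \<mu> * RR \<mu> k"
proof (induction k)
  case 0
  then show ?case using mu by (simp add: RR_def)
next
  case (Suc k)
  have A: "pochhammer (\<mu> + 1) (2 * Suc k + 1) = pochhammer (\<mu> + 1) (2 * k + 1) * (\<mu> + 2 * real k + 2) * (\<mu> + 2 * real k + 3)"
  proof -
    have "2 * Suc k + 1 = Suc (Suc (2 * k + 1))" by simp
    then show ?thesis by (simp only:) (simp add: pochhammer_Suc algebra_simps)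
  qed
  have B: "(fact (2 * Suc k + 1) :: real) = fact (2 * k + 1) * (2 * real k + 2) * (2 * real k + 3)"
  proof -
    have "2 * Suc k + 1 = Suc (Suc (2 * k + 1))" by simp
    then show ?thesis by (simp only:) (simp add: algebra_simps)
  qed
  have C: "RR \<mu> (Suc k) = RR \<mu> k * (2 * (\<mu> + real k + 1) / (2 * real k + 3))"
  proof -
    have p32: "pochhammer (3/2) k > (0::real)" by (rule pochhammer_pos) simp
    have pf: "fact k > (0::real)" by simp
    have "RR \<mu> (Suc k) = pochhammer 1 k * (1 + real k) * (pochhammer (\<mu> + 1) k * (\<mu> + 1 + real k))
        / (pochhammer (3/2) k * (3/2 + real k) * (fact k * (real k + 1)))"
      unfolding RR_def by (simp add: pochhammer_Suc algebra_simps)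
    also have "\<dots> = RR \<mu> k * (2 * (\<mu> + real k + 1) / (2 * real k + 3))"
    proof -
      have k1: "real k + 1 > 0" "3/2 + real k > 0" "2 * real k + 3 > 0" by linarith+
      show ?thesis unfolding RR_def using p32 pf
        by (intro frac_aux) auto
    qed
    finally show ?thesis .
  qed
  have pos: "\<mu> + 2 * real k + 2 > 0" "\<mu> + 2 * real k + 3 > 0" using mu by linarith+
  have "pochhammer (\<mu> + 1) (2 * Suc k + 1) / fact (2 * Suc k + 1) * aa \<mu> (Suc k)
      = (pochhammer (\<mu> + 1) (2 * k + 1) / fact (2 * k + 1) * aa \<mu> k) * (2 * (\<mu> + real k + 1) / (2 * real k + 3))"
    unfolding A B aa.simps using pos by (intro frac_aux2) auto
  also have "\<dots> = 2 powr \<mu> * RR \<mu> (Suc k)" unfolding Suc.IH C by simp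
  finally show ?case .
qed

definition cc :: "real \<Rightarrow> real \<Rightarrow> nat \<Rightarrow> real" where
  "cc \<mu> b n = pochhammer (\<mu> + 1) n / fact n * (b ^ n - (- b) ^ n)"

definition vv :: "real \<Rightarrow> real \<Rightarrow> real \<Rightarrow> nat \<Rightarrow> real" where
  "vv \<mu> \<alpha> b n = cc \<mu> b n * \<alpha> powr (- (\<mu> + 1) - real n) * (LINT t:{0<..}|lborel. gfun \<mu> (\<mu> + 1 + real n) t)"

lemma neg_pow_le: "(b::real) \<ge> 0 \<Longrightarrow> (- b) ^ n \<le> b ^ n"
  by (cases "even n") (auto simp: power_minus_odd)

lemma cc_nonneg: "\<mu> > -1 \<Longrightarrow> b \<ge> 0 \<Longrightarrow> cc \<mu> b n \<ge> 0"
  unfolding cc_def using neg_pow_le[of b n]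
  by (intro mult_nonneg_nonneg divide_nonneg_pos pochhammer_nonneg) auto

lemma binom_diff:
  fixes y b \<mu> :: real
  assumes "0 \<le> b" "b < y"
  shows "(\<lambda>n. cc \<mu> b n * y powr (- (\<mu> + 1) - real n)) sums ((y - b) powr (- (\<mu> + 1)) - (y + b) powr (- (\<mu> + 1)))"
proof -
  define a where "a = - (\<mu> + 1)"
  have s1: "(\<lambda>n. (a gchoose n) * (- b) ^ n * y powr (a - real n)) sums (- b + y) powr a"
    by (rule gen_binomial_real') (use assms in simp)
  have s2: "(\<lambda>n. (a gchoose n) * b ^ n * y powr (a - real n)) sums (b + y) powr a"
    by (rule gen_binomial_real') (use assms in simp)
  have s: "(\<lambda>n. (a gchoose n) * (- b) ^ n * y powr (a - real n) - (a gchoose n) * b ^ n * y powr (a - real n))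
      sums ((- b + y) powr a - (b + y) powr a)"
    by (rule sums_diff[OF s1 s2])
  have eq: "(a gchoose n) * (- b) ^ n * y powr (a - real n) - (a gchoose n) * b ^ n * y powr (a - real n)
      = cc \<mu> b n * y powr (a - real n)" for n
  proof -
    have g: "a gchoose n = (- 1) ^ n * pochhammer (\<mu> + 1) n / fact n"
      unfolding gbinomial_pochhammer a_def by (simp add: add.commute)
    have m1: "(- 1) ^ n * (- b) ^ n = (b ^ n :: real)"
      by (simp add: power_mult_distrib[symmetric])
    have m2: "(- 1) ^ n * b ^ n = ((- b) ^ n :: real)"
      by (simp add: power_mult_distrib[symmetric])
    have "(a gchoose n) * (- b) ^ n * y powr (a - real n) - (a gchoose n) * b ^ n * y powr (a - real n)
        = pochhammer (\<mu> + 1) n / fact n * ((- 1) ^ n * (- b) ^ n - (- 1) ^ n * b ^ n) * y powr (a - real n)"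
      unfolding g by (simp add: algebra_simps)
    also have "\<dots> = cc \<mu> b n * y powr (a - real n)"
      unfolding m1 m2 cc_def by simp
    finally show ?thesis .
  qed
  from s have s': "(\<lambda>n. cc \<mu> b n * y powr (a - real n)) sums ((- b + y) powr a - (b + y) powr a)"
    by (simp only: eq)
  then show ?thesis by (simp add: a_def add.commute)
qed

lemma NN_series:
  fixes \<mu> \<alpha> b :: real
  assumes mu: "\<mu> > -1/2" and al: "\<alpha> > 0" and b: "0 \<le> b" "b < \<alpha>"
  shows "NN \<mu> \<alpha> (- b) = NN \<mu> \<alpha> b + (\<Sum>n. ennreal (vv \<mu> \<alpha> b n))"
proof -
  define T where "T n t = ennreal (indicator {0<..} t * cosh (\<mu> * t) * (cc \<mu> b n * (\<alpha> * cosh t) powr (- (\<mu> + 1) - real n)))" for n t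
  have T_meas[measurable]: "T n \<in> borel_measurable lborel" for n
    unfolding T_def by measurable
  have pw: "ennreal (indicator {0<..} t * cosh (\<mu> * t) * (\<alpha> * cosh t + - b) powr (- (\<mu> + 1)))
      = ennreal (indicator {0<..} t * cosh (\<mu> * t) * (\<alpha> * cosh t + b) powr (- (\<mu> + 1))) + (\<Sum>n. T n t)" for t
  proof -
    define y where "y = \<alpha> * cosh t"
    have y: "b < y" unfolding y_def using al b cosh_real_ge_1[of t]
      by (smt (verit) mult_le_cancel_left1)
    define w where "w = indicator {0<..} t * cosh (\<mu> * t)"
    have w: "w \<ge> 0" unfolding w_def by simp
    have s: "(\<lambda>n. w * (cc \<mu> b n * y powr (- (\<mu> + 1) - real n)))
        sums (w * ((y - b) powr (- (\<mu> + 1)) - (y + b) powr (- (\<mu> + 1))))"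
      by (rule sums_mult[OF binom_diff[OF b(1) y]])
    have nn: "w * (cc \<mu> b n * y powr (- (\<mu> + 1) - real n)) \<ge> 0" for n
      using w cc_nonneg[of \<mu> b n] mu b by simp
    have sumT: "(\<Sum>n. T n t) = ennreal (w * ((y - b) powr (- (\<mu> + 1)) - (y + b) powr (- (\<mu> + 1))))"
      unfolding T_def w_def[symmetric] y_def[symmetric]
      using suminf_ennreal2[OF nn sums_summable[OF s]] sums_unique[OF s] by (simp add: mult.assoc)
    have B: "w * (y + b) powr (- (\<mu> + 1)) \<ge> 0" using w by simp
    have D: "w * ((y - b) powr (- (\<mu> + 1)) - (y + b) powr (- (\<mu> + 1))) \<ge> 0"
      using sums_unique[OF s] suminf_nonneg[OF sums_summable[OF s] nn] by simp
    have eqr: "w * (y - b) powr (- (\<mu> + 1)) = w * (y + b) powr (- (\<mu> + 1)) + w * ((y - b) powr (- (\<mu> + 1)) - (y + b) powr (- (\<mu> + 1)))"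
      by (simp add: algebra_simps)
    have "ennreal (w * (y - b) powr (- (\<mu> + 1))) = ennreal (w * (y + b) powr (- (\<mu> + 1))) + (\<Sum>n. T n t)"
      unfolding sumT by (subst eqr) (rule ennreal_plus[OF B D])
    moreover have "indicator {0<..} t * cosh (\<mu> * t) * (\<alpha> * cosh t + - b) powr (- (\<mu> + 1)) = w * (y - b) powr (- (\<mu> + 1))"
      by (simp add: w_def y_def)
    moreover have "indicator {0<..} t * cosh (\<mu> * t) * (\<alpha> * cosh t + b) powr (- (\<mu> + 1)) = w * (y + b) powr (- (\<mu> + 1))"
      by (simp add: w_def y_def)
    ultimately show ?thesis by simp
  qed
  have Tint: "(\<integral>\<^sup>+t. T n t \<partial>lborel) = ennreal (vv \<mu> \<alpha> b n)" for n
  proof -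
    define p where "p = \<mu> + 1 + real n"
    have p: "p > \<bar>\<mu>\<bar>" using mu by (simp add: p_def)
    have ex: "- (\<mu> + 1) - real n = - p" by (simp add: p_def)
    define K where "K = cc \<mu> b n * \<alpha> powr (- p)"
    have K: "K \<ge> 0" unfolding K_def using cc_nonneg[of \<mu> b n] mu b by simp
    have "T n t = ennreal K * ennreal (indicator {0<..} t * cosh (\<mu> * t) * cosh t powr (- p))" for t
    proof -
      have "(\<alpha> * cosh t) powr (- p) = \<alpha> powr (- p) * cosh t powr (- p)"
        by (rule powr_mult)
      then have "indicator {0<..} t * cosh (\<mu> * t) * (cc \<mu> b n * (\<alpha> * cosh t) powr (- p))
          = K * (indicator {0<..} t * cosh (\<mu> * t) * cosh t powr (- p))"
        unfolding K_def by (simp add: mult_ac)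
      then have "T n t = ennreal (K * (indicator {0<..} t * cosh (\<mu> * t) * cosh t powr (- p)))"
        by (simp only: T_def ex)
      then show ?thesis using K by (simp add: ennreal_mult')
    qed
    then have "(\<integral>\<^sup>+t. T n t \<partial>lborel) = ennreal K * (\<integral>\<^sup>+t. ennreal (indicator {0<..} t * cosh (\<mu> * t) * cosh t powr (- p)) \<partial>lborel)"
      by (simp add: nn_integral_cmult)
    also have "\<dots> = ennreal K * ennreal (LINT t:{0<..}|lborel. gfun \<mu> p t)"
      unfolding g_int(2)[OF p] ..
    also have "\<dots> = ennreal (K * (LINT t:{0<..}|lborel. gfun \<mu> p t))"
      using K by (simp add: ennreal_mult')
    also have "K * (LINT t:{0<..}|lborel. gfun \<mu> p t) = vv \<mu> \<alpha> b n"
      unfolding vv_def K_def ex[symmetric] p_def by simp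
    finally show ?thesis .
  qed
  have "NN \<mu> \<alpha> (- b) = (\<integral>\<^sup>+t. ennreal (indicator {0<..} t * cosh (\<mu> * t) * (\<alpha> * cosh t + b) powr (- (\<mu> + 1))) + (\<Sum>n. T n t) \<partial>lborel)"
    unfolding NN_def using pw by simp
  also have "\<dots> = NN \<mu> \<alpha> b + (\<integral>\<^sup>+t. (\<Sum>n. T n t) \<partial>lborel)"
    unfolding NN_def by (rule nn_integral_add) measurable
  also have "(\<integral>\<^sup>+t. (\<Sum>n. T n t) \<partial>lborel) = (\<Sum>n. \<integral>\<^sup>+t. T n t \<partial>lborel)"
    by (rule nn_integral_suminf) measurable
  finally show ?thesis using Tint by simp
qed

lemma vv_nonneg:
  assumes mu: "\<mu> > -1/2" and al: "\<alpha> > 0" and b: "b \<ge> 0"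
  shows "vv \<mu> \<alpha> b n \<ge> 0"
proof -
  have "(LINT t:{0<..}|lborel. gfun \<mu> (\<mu> + 1 + real n) t) \<ge> 0"
    unfolding set_lebesgue_integral_def
    by (rule Bochner_Integration.integral_nonneg) (auto simp: gfun_nonneg indicator_def)
  then show ?thesis unfolding vv_def using cc_nonneg[of \<mu> b n] mu b by simp
qed

lemma vv_even: "even n \<Longrightarrow> vv \<mu> \<alpha> b n = 0"
  unfolding vv_def cc_def by simp

lemma vv_odd:
  assumes mu: "\<mu> > -1/2" and al: "\<alpha> > 0"
  shows "vv \<mu> \<alpha> b (2 * k + 1) = 2 * b ^ (2 * k + 1) * (2 powr \<mu> * RR \<mu> k) * \<alpha> powr (- (\<mu> + 2 * real k + 2))"
proof -
  have L: "(LINT t:{0<..}|lborel. gfun \<mu> (\<mu> + 1 + real (2 * k + 1)) t) = aa \<mu> k"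
  proof -
    have eqn: "\<mu> + 1 + real (2 * k + 1) = \<mu> + 2 * real k + 2" by simp
    show ?thesis by (subst eqn) (rule Aval[OF mu])
  qed
  have e: "- (\<mu> + 1) - real (2 * k + 1) = - (\<mu> + 2 * real k + 2)" by simp
  have c: "cc \<mu> b (2 * k + 1) = pochhammer (\<mu> + 1) (2 * k + 1) / fact (2 * k + 1) * (2 * b ^ (2 * k + 1))"
    unfolding cc_def by (simp add: power_minus_odd)
  show ?thesis unfolding vv_def L e c QR[OF mu, symmetric] by (simp add: mult_ac)
qed

definition hterm :: "real \<Rightarrow> real \<Rightarrow> nat \<Rightarrow> real" where
  "hterm \<mu> z j = pochhammer 1 j * pochhammer (\<mu> + 1) j / pochhammer (3/2) j * z ^ j / fact j"

lemma hyp2F1_hterm: "hyp2F1 1 (\<mu> + 1) (3/2) z = (\<Sum>j. hterm \<mu> z j)"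
  unfolding hyp2F1_def hterm_def ..

lemma alg1:
  fixes A Z s T Q G' G B R W :: real
  assumes "s \<noteq> 0" "T \<noteq> 0" "Q \<noteq> 0" "G' \<noteq> 0"
  shows "(A * Z) / (s * (T * Q) * G') * G * (2 * B * (T * R) * W) / 2 = G / (s * G') * Z * R * B * (A * W / Q)"
  using assms by (simp add: field_simps)

lemma term_identity:
  fixes \<mu> \<alpha> b :: real
  assumes mu: "\<mu> > -1/2" and al: "\<alpha> > 0" and b: "0 \<le> b" "b < \<alpha>"
  shows "vgC \<mu> \<alpha> b * Gamma (\<mu> + 1) * vv \<mu> \<alpha> b (2 * k + 1) / 2
       = (Gamma (\<mu> + 1) / (sqrt pi * Gamma (\<mu> + 1/2)) * (b / \<alpha>) * (1 - b\<^sup>2 / \<alpha>\<^sup>2) powr (\<mu> + 1/2))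
         * hterm \<mu> (b\<^sup>2 / \<alpha>\<^sup>2) k"
proof -
  define z where "z = b\<^sup>2 / \<alpha>\<^sup>2"
  define e where "e = \<mu> + 1/2"
  have z: "0 \<le> 1 - z"
  proof -
    have "b\<^sup>2 \<le> \<alpha>\<^sup>2" by (rule power_mono) (use b in auto)
    then have "z \<le> 1" unfolding z_def using al by (simp add: divide_le_eq)
    then show ?thesis by simp
  qed
  have h1: "(\<alpha>\<^sup>2 - b\<^sup>2) powr e = \<alpha> powr (2 * e) * (1 - z) powr e"
  proof -
    have "\<alpha>\<^sup>2 - b\<^sup>2 = \<alpha>\<^sup>2 * (1 - z)" unfolding z_def using al by (simp add: field_simps)
    then have "(\<alpha>\<^sup>2 - b\<^sup>2) powr e = (\<alpha>\<^sup>2) powr e * (1 - z) powr e"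
      using z by (simp add: powr_mult)
    moreover have "(\<alpha>\<^sup>2) powr e = \<alpha> powr (2 * e)"
    proof -
      have sq: "\<alpha> powr (2::real) = \<alpha>\<^sup>2" using powr_realpow[of \<alpha> 2] al by simp
      show ?thesis by (simp only: sq[symmetric] powr_powr)
    qed
    ultimately show ?thesis by simp
  qed
  have h2: "(2 * \<alpha>) powr \<mu> = 2 powr \<mu> * \<alpha> powr \<mu>" using al by (simp add: powr_mult)
  have h3: "\<alpha> powr (2 * e) * \<alpha> powr (- (\<mu> + 2 * real k + 2)) / \<alpha> powr \<mu> = inverse (\<alpha> ^ (2 * k + 1))"
  proof -
    have "\<alpha> powr (2 * e) * \<alpha> powr (- (\<mu> + 2 * real k + 2)) / \<alpha> powr \<mu>
        = \<alpha> powr (2 * e + (- (\<mu> + 2 * real k + 2)) - \<mu>)"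
      by (simp only: powr_add[symmetric] powr_diff[symmetric])
    also have "2 * e + (- (\<mu> + 2 * real k + 2)) - \<mu> = - real (2 * k + 1)" by (simp add: e_def)
    also have "\<alpha> powr (- real (2 * k + 1)) = inverse (\<alpha> ^ (2 * k + 1))"
      using al by (simp only: powr_minus powr_realpow[OF al])
    finally show ?thesis .
  qed
  have h4: "b ^ (2 * k + 1) * inverse (\<alpha> ^ (2 * k + 1)) = (b / \<alpha>) * z ^ k"
  proof -
    have p1: "(b / \<alpha>) ^ (2 * k + 1) = (b / \<alpha>) * ((b / \<alpha>) ^ 2) ^ k" by (simp add: power_mult)
    have p2: "(b / \<alpha>) ^ 2 = z" unfolding z_def by (simp add: power_divide)
    have p3: "(b / \<alpha>) ^ (2 * k + 1) = b ^ (2 * k + 1) * inverse (\<alpha> ^ (2 * k + 1))"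
      by (subst power_divide) (simp add: divide_inverse)
    show ?thesis by (simp only: p3[symmetric] p1 p2)
  qed
  have ht: "hterm \<mu> z k = RR \<mu> k * z ^ k"
    unfolding hterm_def RR_def by simp
  have g: "Gamma (\<mu> + 1/2) > 0" "sqrt pi > 0" "\<alpha> powr \<mu> > 0" "(2::real) powr \<mu> > 0"
    using mu al by (auto intro!: Gamma_real_pos)
  have "vgC \<mu> \<alpha> b * Gamma (\<mu> + 1) * vv \<mu> \<alpha> b (2 * k + 1) / 2
      = (\<alpha> powr (2 * e) * (1 - z) powr e) / (sqrt pi * (2 powr \<mu> * \<alpha> powr \<mu>) * Gamma (\<mu> + 1/2)) * Gamma (\<mu> + 1)
        * (2 * b ^ (2 * k + 1) * (2 powr \<mu> * RR \<mu> k) * \<alpha> powr (- (\<mu> + 2 * real k + 2))) / 2"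
    unfolding vgC_def vv_odd[OF mu al] h2 e_def[symmetric] h1 ..
  also have "\<dots> = Gamma (\<mu> + 1) / (sqrt pi * Gamma (\<mu> + 1/2)) * (1 - z) powr e * RR \<mu> k * b ^ (2 * k + 1)
        * (\<alpha> powr (2 * e) * \<alpha> powr (- (\<mu> + 2 * real k + 2)) / \<alpha> powr \<mu>)"
    by (rule alg1) (use g in auto)
  also have "\<dots> = Gamma (\<mu> + 1) / (sqrt pi * Gamma (\<mu> + 1/2)) * (1 - z) powr e * RR \<mu> k * ((b / \<alpha>) * z ^ k)"
    unfolding h3 h4[symmetric] by (simp add: mult_ac)
  also have "\<dots> = (Gamma (\<mu> + 1) / (sqrt pi * Gamma (\<mu> + 1/2)) * (b / \<alpha>) * (1 - z) powr e) * hterm \<mu> z k"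
    unfolding ht by (simp add: mult_ac)
  finally show ?thesis unfolding z_def e_def .
qed

lemma series_identity:
  fixes \<mu> \<alpha> b :: real
  assumes mu: "\<mu> > -1/2" and al: "\<alpha> > 0" and b: "0 \<le> b" "b < \<alpha>" and sm: "summable (vv \<mu> \<alpha> b)"
  shows "vgC \<mu> \<alpha> b * Gamma (\<mu> + 1) * (\<Sum>n. vv \<mu> \<alpha> b n) / 2
       = Gamma (\<mu> + 1) / (sqrt pi * Gamma (\<mu> + 1/2)) * (b / \<alpha>) * (1 - b\<^sup>2 / \<alpha>\<^sup>2) powr (\<mu> + 1/2)
         * hyp2F1 1 (\<mu> + 1) (3/2) (b\<^sup>2 / \<alpha>\<^sup>2)"
proof -
  define S where "S = (\<Sum>n. vv \<mu> \<alpha> b n)"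
  have s: "vv \<mu> \<alpha> b sums S" unfolding S_def using sm by (rule summable_sums)
  have sm2: "strict_mono (\<lambda>k::nat. 2 * k + 1)" by (rule strict_monoI) simp
  have zero: "vv \<mu> \<alpha> b n = 0" if "n \<notin> range (\<lambda>k::nat. 2 * k + 1)" for n
  proof -
    have "even n"
    proof (rule ccontr)
      assume "odd n"
      then have "n = 2 * (n div 2) + 1" by presburger
      then show False using that by blast
    qed
    then show ?thesis by (rule vv_even)
  qed
  have s2: "(\<lambda>k. vv \<mu> \<alpha> b (2 * k + 1)) sums S"
  proof -
    have "(\<lambda>k. vv \<mu> \<alpha> b (2 * k + 1)) sums S \<longleftrightarrow> vv \<mu> \<alpha> b sums S"
      by (rule sums_mono_reindex[OF sm2]) (rule zero)
    then show ?thesis using s by simp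
  qed
  define C where "C = vgC \<mu> \<alpha> b * Gamma (\<mu> + 1)"
  define K where "K = Gamma (\<mu> + 1) / (sqrt pi * Gamma (\<mu> + 1/2)) * (b / \<alpha>) * (1 - b\<^sup>2 / \<alpha>\<^sup>2) powr (\<mu> + 1/2)"
  define z where "z = b\<^sup>2 / \<alpha>\<^sup>2"
  have s3: "(\<lambda>k. C * vv \<mu> \<alpha> b (2 * k + 1) / 2) sums (C * S / 2)"
    by (intro sums_divide sums_mult s2)
  have eqf: "(\<lambda>k. C * vv \<mu> \<alpha> b (2 * k + 1) / 2) = (\<lambda>k. K * hterm \<mu> z k)"
    unfolding C_def K_def z_def using term_identity[OF mu al b] by (intro ext) simp
  have s4: "(\<lambda>k. K * hterm \<mu> z k) sums (C * S / 2)" using s3 unfolding eqf .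
  have "C * S / 2 = K * hyp2F1 1 (\<mu> + 1) (3/2) z"
  proof (cases "K = 0")
    case True
    then show ?thesis using s4 sums_unique[OF s4] by simp
  next
    case False
    then have "summable (hterm \<mu> z)" using sums_summable[OF s4] summable_cmult_iff by blast
    then show ?thesis unfolding hyp2F1_hterm using sums_unique[OF s4] suminf_mult by metis
  qed
  then show ?thesis unfolding C_def K_def z_def S_def .
qed

lemma NN_diff:
  fixes \<mu> \<alpha> b :: real
  assumes mu: "\<mu> > -1/2" and al: "\<alpha> > 0" and b: "0 \<le> b" "b < \<alpha>" and fin: "NN \<mu> \<alpha> (- b) \<noteq> \<top>"
  shows "summable (vv \<mu> \<alpha> b)" "enn2real (NN \<mu> \<alpha> (- b)) = enn2real (NN \<mu> \<alpha> b) + (\<Sum>n. vv \<mu> \<alpha> b n)"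
proof -
  note ser = NN_series[OF mu al b]
  have nn: "\<And>n. vv \<mu> \<alpha> b n \<ge> 0" using vv_nonneg[OF mu al b(1)] .
  have f1: "NN \<mu> \<alpha> b \<noteq> \<top>" "(\<Sum>n. ennreal (vv \<mu> \<alpha> b n)) \<noteq> \<top>" using fin unfolding ser by auto
  show sm: "summable (vv \<mu> \<alpha> b)" by (rule summable_suminf_not_top[OF nn f1(2)])
  have "(\<Sum>n. ennreal (vv \<mu> \<alpha> b n)) = ennreal (\<Sum>n. vv \<mu> \<alpha> b n)" by (rule suminf_ennreal2[OF nn sm])
  moreover have "(\<Sum>n. vv \<mu> \<alpha> b n) \<ge> 0" using suminf_nonneg[OF sm nn] .
  ultimately show "enn2real (NN \<mu> \<alpha> (- b)) = enn2real (NN \<mu> \<alpha> b) + (\<Sum>n. vv \<mu> \<alpha> b n)"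
    unfolding ser using f1(1) by (subst enn2real_plus) (auto simp: less_top[symmetric])
qed

lemma vg_pdf_sym: "vg_pdf \<mu> \<alpha> \<beta> x = vg_pdf \<mu> \<alpha> (- \<beta>) (- x)"
  unfolding vg_pdf_def by simp

lemma vgC_sym: "vgC \<mu> \<alpha> (- \<beta>) = vgC \<mu> \<alpha> \<beta>"
  unfolding vgC_def by simp

lemma vgC_pos: "\<mu> > -1/2 \<Longrightarrow> \<alpha> > 0 \<Longrightarrow> \<bar>\<beta>\<bar> < \<alpha> \<Longrightarrow> vgC \<mu> \<alpha> \<beta> > 0"
proof -
  assume mu: "\<mu> > -1/2" and al: "\<alpha> > 0" and be: "\<bar>\<beta>\<bar> < \<alpha>"
  have "\<beta>\<^sup>2 < \<alpha>\<^sup>2" using be al by (metis abs_less_iff power2_abs power_strict_mono abs_ge_zero zero_less_numeral)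
  then show ?thesis unfolding vgC_def using mu al
    by (intro divide_pos_pos mult_pos_pos) (auto intro!: Gamma_real_pos)
qed

lemma besselK_nonneg: "besselK \<mu> a \<ge> 0"
  unfolding besselK_def set_lebesgue_integral_def
  by (rule Bochner_Integration.integral_nonneg) (auto simp: indicator_def)

lemma vg_pdf_nonneg: "\<mu> > -1/2 \<Longrightarrow> \<alpha> > 0 \<Longrightarrow> vg_pdf \<mu> \<alpha> \<beta> x \<ge> 0"
  unfolding vg_pdf_def using vgC_nonneg[of \<mu> \<alpha> \<beta>] besselK_nonneg[of \<mu> "\<alpha> * \<bar>x\<bar>"]
  by (simp add: vgC_def[symmetric])

lemma vg_prob:
  fixes M :: "'a measure" and X :: "'a \<Rightarrow> real" and \<mu> \<alpha> \<beta> :: real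
  assumes P: "prob_space M" and mu: "\<mu> > -1/2" and al: "\<alpha> > 0" and be: "\<bar>\<beta>\<bar> < \<alpha>"
    and D: "distributed M lborel X (\<lambda>x. ennreal (vg_pdf \<mu> \<alpha> \<beta> x))"
  shows "measure M {\<omega> \<in> space M. X \<omega> \<le> 0} = vgP \<mu> \<alpha> \<beta>"
    and "measure M {\<omega> \<in> space M. X \<omega> = 0} = 0"
proof -
  interpret prob_space M by (rule P)
  define f where "f = (\<lambda>x. ennreal (vg_pdf \<mu> \<alpha> \<beta> x))"
  have fm[measurable]: "f \<in> borel_measurable borel"
    using distributed_borel_measurable[OF D] unfolding f_def by simp
  have em: "emeasure M {\<omega> \<in> space M. X \<omega> \<in> A} = (\<integral>\<^sup>+x. f x * indicator A x \<partial>lborel)" if "A \<in> sets borel" for A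
  proof -
    have "{\<omega> \<in> space M. X \<omega> \<in> A} = X -` A \<inter> space M" by auto
    then show ?thesis using distributed_emeasure[OF D, of A] that by (simp add: f_def)
  qed
  have E1: "emeasure M {\<omega> \<in> space M. X \<omega> \<le> 0} = (\<integral>\<^sup>+x. f x * indicator {..0} x \<partial>lborel)"
    using em[of "{..0}"] by simp
  have E2: "emeasure M {\<omega> \<in> space M. X \<omega> \<ge> 0} = (\<integral>\<^sup>+x. f x * indicator {0..} x \<partial>lborel)"
    using em[of "{0..}"] by simp
  have E0: "emeasure M {\<omega> \<in> space M. X \<omega> = 0} = 0"
  proof -
    have "emeasure M {\<omega> \<in> space M. X \<omega> = 0} = (\<integral>\<^sup>+x. f x * indicator {0} x \<partial>lborel)"
      using em[of "{0}"] by simp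
    also have "\<dots> = 0"
    proof (subst nn_integral_0_iff_AE)
      show "(\<lambda>x. f x * indicator {0} x) \<in> borel_measurable lborel" by measurable
      show "AE x in lborel. f x * indicator {0} x = 0"
        using AE_lborel_singleton[of 0] by eventually_elim (simp add: indicator_def)
    qed
    finally show ?thesis .
  qed
  have tot: "(\<integral>\<^sup>+x. f x * indicator {..0} x \<partial>lborel) + (\<integral>\<^sup>+x. f x * indicator {0..} x \<partial>lborel) = 1"
  proof -
    have "(\<integral>\<^sup>+x. f x * indicator {..0} x \<partial>lborel) + (\<integral>\<^sup>+x. f x * indicator {0..} x \<partial>lborel)
        = (\<integral>\<^sup>+x. f x * indicator {..0} x + f x * indicator {0..} x \<partial>lborel)"
      by (rule nn_integral_add[symmetric]) measurable
    also have "\<dots> = (\<integral>\<^sup>+x. f x * indicator UNIV x \<partial>lborel)"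
      by (intro nn_integral_cong_AE eventually_mono[OF AE_lborel_singleton[of 0]]) (auto simp: indicator_def)
    also have "\<dots> = emeasure M {\<omega> \<in> space M. X \<omega> \<in> UNIV}" using em[of UNIV] by simp
    also have "\<dots> = 1" using emeasure_space_1 by simp
    finally show ?thesis .
  qed
  define c where "c = vgC \<mu> \<alpha> \<beta> * Gamma (\<mu> + 1)"
  have c: "c > 0" unfolding c_def using vgC_pos[OF mu al be] mu by (simp add: Gamma_real_pos)
  have I1: "(\<integral>\<^sup>+x. f x * indicator {..0} x \<partial>lborel) = ennreal c * NN \<mu> \<alpha> \<beta>"
  proof -
    have "(\<integral>\<^sup>+x. f x * indicator {..0} x \<partial>lborel) = (\<integral>\<^sup>+x. f x * indicator {..<0} x \<partial>lborel)"
      by (intro nn_integral_cong_AE eventually_mono[OF AE_lborel_singleton[of 0]]) (auto simp: indicator_def)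
    also have "\<dots> = ennreal \<bar>- 1\<bar> * (\<integral>\<^sup>+x. f (0 + (- 1) * x) * indicator {..<0} (0 + (- 1) * x) \<partial>lborel)"
      by (rule nn_integral_real_affine) auto
    also have "\<dots> = (\<integral>\<^sup>+x. f (- x) * indicator {..<0} (- x) \<partial>lborel)"
      by simp
    also have "\<dots> = (\<integral>\<^sup>+x. ennreal (indicator {0<..} x * vg_pdf \<mu> \<alpha> \<beta> (- x)) \<partial>lborel)"
      by (intro nn_integral_cong) (auto simp: f_def indicator_def)
    also have "\<dots> = ennreal c * NN \<mu> \<alpha> \<beta>"
      unfolding c_def by (rule neg_half_integral[OF mu al be])
    finally show ?thesis .
  qed
  have I2: "(\<integral>\<^sup>+x. f x * indicator {0..} x \<partial>lborel) = ennreal c * NN \<mu> \<alpha> (- \<beta>)"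
  proof -
    have be': "\<bar>- \<beta>\<bar> < \<alpha>" using be by simp
    have "(\<integral>\<^sup>+x. f x * indicator {0..} x \<partial>lborel) = (\<integral>\<^sup>+x. ennreal (indicator {0<..} x * vg_pdf \<mu> \<alpha> (- \<beta>) (- x)) \<partial>lborel)"
      by (intro nn_integral_cong_AE eventually_mono[OF AE_lborel_singleton[of 0]])
         (auto simp: indicator_def f_def vg_pdf_sym[of \<mu> \<alpha> \<beta>])
    also have "\<dots> = ennreal c * NN \<mu> \<alpha> (- \<beta>)"
      unfolding c_def vgC_sym[of \<mu> \<alpha> \<beta>, symmetric] by (rule neg_half_integral[OF mu al be'])
    finally show ?thesis .
  qed
  have sum1: "ennreal c * NN \<mu> \<alpha> \<beta> + ennreal c * NN \<mu> \<alpha> (- \<beta>) = 1" using tot I1 I2 by simp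
  have fin1: "NN \<mu> \<alpha> \<beta> \<noteq> \<top>" and fin2: "NN \<mu> \<alpha> (- \<beta>) \<noteq> \<top>"
    using sum1 c by (auto simp: ennreal_mult_eq_top_iff)
  define r1 where "r1 = enn2real (NN \<mu> \<alpha> \<beta>)"
  define r2 where "r2 = enn2real (NN \<mu> \<alpha> (- \<beta>))"
  have rr: "c * r1 + c * r2 = 1"
  proof -
    have "enn2real (ennreal c * NN \<mu> \<alpha> \<beta> + ennreal c * NN \<mu> \<alpha> (- \<beta>)) = 1" using sum1 by simp
    then show ?thesis using fin1 fin2 c unfolding r1_def r2_def
      by (subst (asm) enn2real_plus) (auto simp: enn2real_mult less_top[symmetric] ennreal_mult_eq_top_iff)
  qed
  have P1: "measure M {\<omega> \<in> space M. X \<omega> \<le> 0} = c * r1"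
    unfolding measure_def E1 I1 r1_def using c by (simp add: enn2real_mult)
  show "measure M {\<omega> \<in> space M. X \<omega> = 0} = 0" unfolding measure_def E0 by simp
  define K where "K b = Gamma (\<mu> + 1) / (sqrt pi * Gamma (\<mu> + 1/2)) * (b / \<alpha>) * (1 - b\<^sup>2 / \<alpha>\<^sup>2) powr (\<mu> + 1/2)
         * hyp2F1 1 (\<mu> + 1) (3/2) (b\<^sup>2 / \<alpha>\<^sup>2)" for b
  have vgPK: "vgP \<mu> \<alpha> \<beta> = 1/2 - K \<beta>" unfolding vgP_def K_def by (simp add: mult_ac)
  show "measure M {\<omega> \<in> space M. X \<omega> \<le> 0} = vgP \<mu> \<alpha> \<beta>"
  proof (cases "\<beta> \<ge> 0")
    case True
    define b where "b = \<beta>"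
    have b: "0 \<le> b" "b < \<alpha>" using True be by (auto simp: b_def)
    note nd = NN_diff[OF mu al b, unfolded b_def, OF fin2]
    have si: "c * (\<Sum>n. vv \<mu> \<alpha> \<beta> n) / 2 = K \<beta>"
      unfolding c_def K_def using series_identity[OF mu al b, unfolded b_def, OF nd(1)] by simp
    have "r2 = r1 + (\<Sum>n. vv \<mu> \<alpha> \<beta> n)" unfolding r1_def r2_def using nd(2) .
    then have "c * r1 = 1/2 - c * (\<Sum>n. vv \<mu> \<alpha> \<beta> n) / 2" using rr by (simp add: algebra_simps)
    then show ?thesis unfolding P1 vgPK si .
  next
    case False
    define b where "b = - \<beta>"
    have b: "0 \<le> b" "b < \<alpha>" using False be by (auto simp: b_def)
    have fin1': "NN \<mu> \<alpha> (- b) \<noteq> \<top>" using fin1 by (simp add: b_def)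
    note nd = NN_diff[OF mu al b fin1']
    have cb: "c = vgC \<mu> \<alpha> b * Gamma (\<mu> + 1)" unfolding c_def b_def vgC_sym ..
    have si: "c * (\<Sum>n. vv \<mu> \<alpha> b n) / 2 = K b"
      unfolding cb K_def using series_identity[OF mu al b nd(1)] by simp
    have Kb: "K \<beta> = - K b" unfolding K_def b_def by simp
    have "r1 = r2 + (\<Sum>n. vv \<mu> \<alpha> b n)" unfolding r1_def r2_def using nd(2) by (simp add: b_def)
    then have "c * r1 = 1/2 + c * (\<Sum>n. vv \<mu> \<alpha> b n) / 2" using rr by (simp add: algebra_simps)
    then show ?thesis unfolding P1 vgPK si Kb by simp
  qed
qed

theorem mainTheorem5:
  fixes M :: "'a measure" and X Y :: "'a \<Rightarrow> real"
    and m n \<alpha>1 \<alpha>2 \<beta>1 \<beta>2 :: real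
  assumes "prob_space M"
    and "m > -1/2" and "n > -1/2"
    and "\<alpha>1 > 0" and "\<alpha>2 > 0"
    and "\<bar>\<beta>1\<bar> < \<alpha>1" and "\<bar>\<beta>2\<bar> < \<alpha>2"
    and "distributed M lborel X (\<lambda>x. ennreal (vg_pdf m \<alpha>1 \<beta>1 x))"
    and "distributed M lborel Y (\<lambda>y. ennreal (vg_pdf n \<alpha>2 \<beta>2 y))"
    and "prob_space.indep_var M borel X borel Y"
  shows "measure M {\<omega> \<in> space M. X \<omega> * Y \<omega> \<le> 0}
         = vgP m \<alpha>1 \<beta>1 + vgP n \<alpha>2 \<beta>2 - 2 * vgP m \<alpha>1 \<beta>1 * vgP n \<alpha>2 \<beta>2"
proof -
  interpret prob_space M by (rule assms(1))
  note DX = assms(8) and DY = assms(9)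
  have Xm[measurable]: "X \<in> borel_measurable M" using distributed_measurable[OF DX] by simp
  have Ym[measurable]: "Y \<in> borel_measurable M" using distributed_measurable[OF DY] by simp
  have ind: "indep_var borel X borel Y" using assms(10) .
  define pX where "pX = vgP m \<alpha>1 \<beta>1"
  define pY where "pY = vgP n \<alpha>2 \<beta>2"
  have X1: "prob {\<omega> \<in> space M. X \<omega> \<le> 0} = pX" and X0: "prob {\<omega> \<in> space M. X \<omega> = 0} = 0"
    using vg_prob[OF assms(1) assms(2) assms(4) assms(6) DX] by (simp_all add: pX_def)
  have Y1: "prob {\<omega> \<in> space M. Y \<omega> \<le> 0} = pY" and Y0: "prob {\<omega> \<in> space M. Y \<omega> = 0} = 0"
    using vg_prob[OF assms(1) assms(3) assms(5) assms(7) DY] by (simp_all add: pY_def)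
  have compl: "prob {\<omega> \<in> space M. Z \<omega> \<ge> 0} = 1 - prob {\<omega> \<in> space M. Z \<omega> \<le> 0}"
    if Zm[measurable]: "Z \<in> borel_measurable M" and Z0: "prob {\<omega> \<in> space M. Z \<omega> = 0} = 0" for Z :: "'a \<Rightarrow> real"
  proof -
    have "prob ({\<omega> \<in> space M. Z \<omega> \<le> 0} \<union> {\<omega> \<in> space M. Z \<omega> \<ge> 0})
        = prob {\<omega> \<in> space M. Z \<omega> \<le> 0} + prob {\<omega> \<in> space M. Z \<omega> \<ge> 0}
          - prob ({\<omega> \<in> space M. Z \<omega> \<le> 0} \<inter> {\<omega> \<in> space M. Z \<omega> \<ge> 0})"
      by (rule measure_Un3) (auto simp: fmeasurable_eq_sets)
    moreover have "{\<omega> \<in> space M. Z \<omega> \<le> 0} \<union> {\<omega> \<in> space M. Z \<omega> \<ge> 0} = space M" by auto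
    moreover have "{\<omega> \<in> space M. Z \<omega> \<le> 0} \<inter> {\<omega> \<in> space M. Z \<omega> \<ge> 0} = {\<omega> \<in> space M. Z \<omega> = 0}" by auto
    ultimately show ?thesis using Z0 prob_space by simp
  qed
  have X2: "prob {\<omega> \<in> space M. X \<omega> \<ge> 0} = 1 - pX" using compl[OF Xm X0] X1 by simp
  have Y2: "prob {\<omega> \<in> space M. Y \<omega> \<ge> 0} = 1 - pY" using compl[OF Ym Y0] Y1 by simp
  have indp: "prob {\<omega> \<in> space M. X \<omega> \<in> A \<and> Y \<omega> \<in> B} = prob {\<omega> \<in> space M. X \<omega> \<in> A} * prob {\<omega> \<in> space M. Y \<omega> \<in> B}"
    if "A \<in> sets borel" "B \<in> sets borel" for A B
  proof -
    have "prob ((\<lambda>x. (X x, Y x)) -` (A \<times> B) \<inter> space M) = prob (X -` A \<inter> space M) * prob (Y -` B \<inter> space M)"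
      by (rule indep_varD[OF ind that])
    moreover have "(\<lambda>x. (X x, Y x)) -` (A \<times> B) \<inter> space M = {\<omega> \<in> space M. X \<omega> \<in> A \<and> Y \<omega> \<in> B}" by auto
    moreover have "X -` A \<inter> space M = {\<omega> \<in> space M. X \<omega> \<in> A}" by auto
    moreover have "Y -` B \<inter> space M = {\<omega> \<in> space M. Y \<omega> \<in> B}" by auto
    ultimately show ?thesis by simp
  qed
  define E1 where "E1 = {\<omega> \<in> space M. X \<omega> \<le> 0 \<and> Y \<omega> \<ge> 0}"
  define E2 where "E2 = {\<omega> \<in> space M. X \<omega> \<ge> 0 \<and> Y \<omega> \<le> 0}"
  have P1: "prob E1 = pX * (1 - pY)"
    using indp[of "{..0}" "{0..}"] X1 Y2 unfolding E1_def by simp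
  have P2: "prob E2 = (1 - pX) * pY"
    using indp[of "{0..}" "{..0}"] X2 Y1 unfolding E2_def by simp
  have P12: "prob (E1 \<inter> E2) = 0"
  proof -
    have "prob (E1 \<inter> E2) \<le> prob {\<omega> \<in> space M. X \<omega> = 0}"
      by (rule finite_measure_mono) (auto simp: E1_def E2_def)
    then show ?thesis using X0 measure_nonneg[of M "E1 \<inter> E2"] by simp
  qed
  have eqset: "{\<omega> \<in> space M. X \<omega> * Y \<omega> \<le> 0} = E1 \<union> E2"
    unfolding E1_def E2_def by (auto simp: mult_le_0_iff)
  have "prob (E1 \<union> E2) = prob E1 + prob E2 - prob (E1 \<inter> E2)"
    by (rule measure_Un3) (auto simp: fmeasurable_eq_sets E1_def E2_def)
  then show ?thesis unfolding eqset P1 P2 P12 pX_def[symmetric] pY_def[symmetric]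
    by (simp add: algebra_simps)
qed

end
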